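(* Let $0<\lambda\le1$ and $f\in\mathcal U(\lambda)$. Then the odd function $f_2$ defined by $$\frac{z}{f_2(z)}=\frac12\left(\frac{z}{f(z)}+\frac{z}{-f(-z)}\right),\qquad z\in\mathbb D,$$ belongs to $\mathcal U(\lambda)$.
   Context: $\mathbb D=\{z\in\mathbb C:|z|<1\}$. $\mathcal A$ is the class of functions $f$ analytic in $\mathbb D$ with $f(z)=z+\sum_{k\ge2}a_kz^k$. For $f\in\mathcal A$ with $f(z)\ne0$ for $z\in\mathbb D\setminus\{0\}$, set $U_f(z)=\left(\frac{z}{f(z)}\right)^2f'(z)-1$. For $0<\lambda\le1$, $\mathcal U(\lambda)$ is the class of such $f\in\mathcal A$ with $|U_f(z)|<\lambda$ for all $z\in\mathbb D$. *)

theory Defs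
  imports "HOL-Complex_Analysis.Complex_Analysis"
begin

definition unit_disk :: "complex set" where
  "unit_disk = ball 0 1"

definition classA :: "(complex \<Rightarrow> complex) set" where
  "classA = {f. f holomorphic_on unit_disk \<and> f 0 = 0 \<and> deriv f 0 = 1}"

text \<open>U_f(z) = (z / f z)^2 f'(z) - 1.  At z = 0 it is defined by its (removable)
  limit, which equals 0; so the condition |U_f| < lambda is only imposed on
  the punctured disk (at 0 it holds trivially since lambda > 0).\<close>
definition U_op :: "(complex \<Rightarrow> complex) \<Rightarrow> complex \<Rightarrow> complex" where
  "U_op f z = (if z = 0 then 0 else (z / f z)^2 * deriv f z - 1)"

definition classU :: "real \<Rightarrow> (complex \<Rightarrow> complex) set" where
  "classU lam = {f. f \<in> classA \<and> (\<forall>z\<in>unit_disk - {0}. f z \<noteq> 0)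
                    \<and> (\<forall>z\<in>unit_disk. norm (U_op f z) < lam)}"

definition odd_part :: "(complex \<Rightarrow> complex) \<Rightarrow> complex \<Rightarrow> complex" where
  "odd_part f z = (if z = 0 then 0
                   else z / ((1/2) * (z / f z + z / (- f (- z)))))"

end

theory Submission
  imports Defs
begin

lemma cont_agree:
  fixes F K :: "complex \<Rightarrow> complex"
  assumes "continuous_on S F" "continuous_on S K" "open S" "a \<in> S"
    "\<And>z. z \<in> S \<Longrightarrow> z \<noteq> a \<Longrightarrow> F z = K z"
  shows "F a = K a"
proof -
  have 1: "(F \<longlongrightarrow> F a) (at a)" using assms continuous_on_eq_continuous_at isCont_def by blast
  have 2: "(K \<longlongrightarrow> K a) (at a)" using assms continuous_on_eq_continuous_at isCont_def by blast
  have ev: "eventually (\<lambda>z. F z = K z) (at a)"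
    using eventually_at_in_open[OF assms(3,4)] by (rule eventually_mono) (use assms(5) in auto)
  have "(K \<longlongrightarrow> F a) (at a)" using 1 ev by (rule Lim_transform_eventually)
  then show ?thesis using 2 tendsto_unique at_neq_bot by blast
qed

lemma neg_deriv:
  assumes "(g has_field_derivative d) (at (-z))"
  shows "((\<lambda>w. g (-w)) has_field_derivative - d) (at z)"
proof -
  have "((\<lambda>w. g (-w)) has_field_derivative d * (-1)) (at z)"
    using DERIV_chain2[of g d "\<lambda>w. -w" z "-1" UNIV] assms by (simp add: DERIV_minus)
  then show ?thesis by simp
qed

theorem corollary5p4:
  fixes lam :: real and f :: "complex \<Rightarrow> complex"
  assumes "0 < lam" and "lam \<le> 1" and "f \<in> classU lam"
  shows "odd_part f \<in> classU lam"
proof -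
  have fh: "f holomorphic_on ball 0 1" and f0: "f 0 = 0" and fd: "deriv f 0 = 1"
    and fnz: "\<And>z. z \<in> ball 0 1 \<Longrightarrow> z \<noteq> 0 \<Longrightarrow> f z \<noteq> 0"
    and fU: "\<And>z. z \<in> ball 0 1 \<Longrightarrow> norm (U_op f z) < lam"
    using assms(3) by (auto simp: classU_def classA_def unit_disk_def)
  obtain q where qh: "q holomorphic_on ball 0 1" and fq: "\<And>z. norm z < 1 \<Longrightarrow> f z = z * q z"
    and q0: "deriv f 0 = q 0"
    using Schwarz3[OF fh f0] by blast
  have qnz: "q z \<noteq> 0" if "z \<in> ball 0 1" for z
  proof (cases "z = 0")
    case True then show ?thesis using q0 fd by simp
  next
    case False then show ?thesis using fnz[OF that False] fq[of z] that by auto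
  qed
  define g where "g z = 1 / q z" for z
  have gh: "g holomorphic_on ball 0 1" unfolding g_def
    by (intro holomorphic_intros qh) (use qnz in auto)
  have gnz: "g z \<noteq> 0" if "z \<in> ball 0 1" for z using qnz[OF that] by (simp add: g_def)
  define g' where "g' = deriv g"
  have g'h: "g' holomorphic_on ball 0 1" unfolding g'_def using holomorphic_deriv gh by blast
  have gd: "(g has_field_derivative g' z) (at z)" if "z \<in> ball 0 1" for z
    unfolding g'_def using holomorphic_derivI[OF gh open_ball that] .
  have g'd: "(g' has_field_derivative deriv g' z) (at z)" if "z \<in> ball 0 1" for z
    using holomorphic_derivI[OF g'h open_ball that] .
  have fg: "f z = z / g z" if "z \<in> ball 0 1" for z
    using fq[of z] that qnz[OF that] by (simp add: g_def)
  have fderiv: "deriv f z = (g z - z * g' z) / (g z)^2" if z: "z \<in> ball 0 1" for z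
  proof -
    have "((\<lambda>w. w / g w) has_field_derivative (1 * g z - g' z * z) / (g z ^ Suc (Suc 0))) (at z)"
      by (rule DERIV_quotient[OF DERIV_ident gd[OF z] gnz[OF z]])
    then have "(f has_field_derivative (1 * g z - g' z * z) / (g z ^ Suc (Suc 0))) (at z)"
      by (rule has_field_derivative_transform_within_open[OF _ open_ball z]) (simp add: fg)
    then show ?thesis by (simp add: DERIV_imp_deriv power2_eq_square mult.commute)
  qed
  have Uf: "U_op f z = g z - z * g' z - 1" if z: "z \<in> ball 0 1" "z \<noteq> 0" for z
  proof -
    have "z / f z = g z" using fg[OF z(1)] z gnz[OF z(1)] by simp
    then show ?thesis using z gnz[OF z(1)] by (simp add: U_op_def fderiv power2_eq_square)
  qed
  have neg: "-z \<in> ball 0 1" if "z \<in> ball 0 1" for z :: complex using that by (simp add: dist_0_norm)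
  define G where "G z = (g z + g (-z)) / 2" for z
  define G' where "G' z = (g' z - g' (-z)) / 2" for z
  have Gd: "(G has_field_derivative G' z) (at z)" if z: "z \<in> ball 0 1" for z
  proof -
    have "((\<lambda>w. (g w + g (-w)) / 2) has_field_derivative (g' z + - g' (-z)) / 2) (at z)"
      by (intro DERIV_cdivide DERIV_add gd z neg_deriv gd neg)
    then show ?thesis unfolding G_def G'_def by simp
  qed
  have G'd: "\<exists>d. (G' has_field_derivative d) (at z)" if z: "z \<in> ball 0 1" for z
  proof -
    have "((\<lambda>w. (g' w - g' (-w)) / 2) has_field_derivative (deriv g' z - - deriv g' (-z)) / 2) (at z)"
      by (intro DERIV_cdivide DERIV_diff g'd z neg_deriv g'd neg)
    then show ?thesis unfolding G'_def by blast
  qed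
  have Gh: "G holomorphic_on ball 0 1" using Gd by (auto simp: holomorphic_on_open) blast
  have G'h: "G' holomorphic_on ball 0 1" using G'd by (auto simp: holomorphic_on_open)
  have g0: "g 0 = 1" using q0 fd by (simp add: g_def)
  have G0: "G 0 = 1" by (simp add: G_def g0)
  have G'0: "G' 0 = 0" by (simp add: G'_def)
  define V where "V z = G z - z * G' z - 1" for z
  have Vh: "V holomorphic_on ball 0 1" unfolding V_def by (intro holomorphic_intros Gh G'h)
  have V0: "V 0 = 0" by (simp add: V_def G0)
  have Vev: "V (-z) = V z" for z by (simp add: V_def G_def G'_def algebra_simps)
  have Vlt: "norm (V z) < lam" if z: "z \<in> ball 0 1" for z
  proof (cases "z = 0")
    case True then show ?thesis using V0 assms(1) by simp
  next
    case False
    have mz: "-z \<noteq> 0" using False by simp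
    have "V z = (U_op f z + U_op f (-z)) / 2"
      unfolding Uf[OF z False] Uf[OF neg[OF z] mz] V_def G_def G'_def by (simp add: field_simps)
    also have "norm \<dots> \<le> (norm (U_op f z) + norm (U_op f (-z))) / 2"
      by (simp add: norm_triangle_ineq)
    also have "\<dots> < lam" using fU[OF z] fU[OF neg[OF z]] by simp
    finally show ?thesis .
  qed
  have Vlt1: "norm (V z) < 1" if "norm z < 1" for z using Vlt[of z] that assms(2) by simp
  have Vle: "norm (V z) \<le> norm z" if "norm z < 1" for z
    using Schwarz_Lemma(1)[OF Vh V0 Vlt1 that] .
  have Vstrict: "norm (V z) < norm z" if z: "norm z < 1" "z \<noteq> 0" for z
  proof (rule ccontr)
    assume "\<not> norm (V z) < norm z"
    then have "norm (V z) = norm z" using Vle[OF z(1)] by simp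
    then obtain \<alpha> where al: "\<And>w. norm w < 1 \<Longrightarrow> V w = \<alpha> * w" and an: "norm \<alpha> = 1"
      using Schwarz_Lemma(3)[OF Vh V0 Vlt1 z(1)] z by blast
    have "\<alpha> * (-z) = \<alpha> * z" using al[of z] al[of "-z"] z Vev[of z] by simp
    then show False using an z by simp
  qed
  have dV0: "deriv V 0 = 0"
  proof -
    have 1: "(V has_field_derivative deriv V 0) (at 0)" using holomorphic_derivI[OF Vh open_ball, of 0] by simp
    have "((\<lambda>w. V (-w)) has_field_derivative - deriv V 0) (at 0)" using neg_deriv[of V "deriv V 0" 0] 1 by simp
    then have "(V has_field_derivative - deriv V 0) (at 0)" using Vev by simp
    then have "deriv V 0 = - deriv V 0" using DERIV_unique[OF 1] by blast
    then show ?thesis by simp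
  qed
  obtain V1 where V1h: "V1 holomorphic_on ball 0 1" and VV1: "\<And>z. norm z < 1 \<Longrightarrow> V z = z * V1 z"
    and V10': "deriv V 0 = V1 0"
    using Schwarz3[OF Vh V0] by blast
  have V10: "V1 0 = 0" using V10' dV0 by simp
  have V1lt: "norm (V1 z) < 1" if z: "norm z < 1" for z
  proof (cases "z = 0")
    case True then show ?thesis using V10 by simp
  next
    case False
    have "norm z * norm (V1 z) < norm z * 1" using Vstrict[OF z False] VV1[OF z] by (simp add: norm_mult)
    then show ?thesis using False by simp
  qed
  obtain V2 where V2h: "V2 holomorphic_on ball 0 1" and V1V2: "\<And>z. norm z < 1 \<Longrightarrow> V1 z = z * V2 z"
    and V20: "deriv V1 0 = V2 0"
    using Schwarz3[OF V1h V10] by blast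
  have V2le: "norm (V2 z) \<le> 1" if z: "norm z < 1" for z
  proof (cases "z = 0")
    case True then show ?thesis using Schwarz_Lemma(2)[OF V1h V10 V1lt z] V20 by simp
  next
    case False
    have "norm z * norm (V2 z) \<le> norm z * 1"
      using Schwarz_Lemma(1)[OF V1h V10 V1lt z] V1V2[OF z] by (simp add: norm_mult)
    then show ?thesis using False by simp
  qed
  define H where "H z = G z - 1" for z
  have Hh: "H holomorphic_on ball 0 1" unfolding H_def by (intro holomorphic_intros Gh)
  have H0: "H 0 = 0" by (simp add: H_def G0)
  have Hd: "(H has_field_derivative G' z) (at z)" if "z \<in> ball 0 1" for z
    unfolding H_def using DERIV_diff[OF Gd[OF that] DERIV_const[of 1]] by simp
  obtain W where Wh: "W holomorphic_on ball 0 1" and HW: "\<And>z. norm z < 1 \<Longrightarrow> H z = z * W z"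
    and W0': "deriv H 0 = W 0"
    using Schwarz3[OF Hh H0] by blast
  have W0: "W 0 = 0" using W0' DERIV_imp_deriv[OF Hd[of 0]] G'0 by simp
  have Wd1: "(W has_field_derivative - V2 z) (at z)" if z: "z \<in> ball 0 1" "z \<noteq> 0" for z
  proof -
    have "((\<lambda>w. H w / w) has_field_derivative (G' z * z - 1 * H z) / (z ^ Suc (Suc 0))) (at z)"
      by (rule DERIV_quotient[OF Hd[OF z(1)] DERIV_ident z(2)])
    then have *: "(W has_field_derivative (G' z * z - 1 * H z) / (z ^ Suc (Suc 0))) (at z)"
    proof (rule has_field_derivative_transform_within_open[of _ _ _ "ball 0 1 - {0}"])
      show "open (ball 0 1 - {0})" by auto
      show "z \<in> ball 0 1 - {0}" using z by auto
      show "H x / x = W x" if "x \<in> ball 0 1 - {0}" for x using HW[of x] that by auto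
    qed
    have "V z = z * (z * V2 z)" using VV1[of z] V1V2[of z] z by simp
    then have "G' z * z - 1 * H z = - (z * (z * V2 z))" by (simp add: V_def H_def algebra_simps)
    then have "(G' z * z - 1 * H z) / (z ^ Suc (Suc 0)) = - V2 z" using z(2) by (simp add: field_simps)
    then show ?thesis using * by simp
  qed
  have dW: "deriv W 0 = - V2 0"
  proof -
   have "deriv W 0 = (\<lambda>z. - V2 z) 0"
   proof (rule cont_agree[of "ball 0 1" "deriv W" "\<lambda>z. - V2 z" 0])
    show "continuous_on (ball 0 1) (deriv W)"
      using holomorphic_deriv[OF Wh open_ball] holomorphic_on_imp_continuous_on by blast
    show "continuous_on (ball 0 1) (\<lambda>z. - V2 z)"
      using V2h holomorphic_on_imp_continuous_on by (intro continuous_intros) blast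
    show "deriv W z = - V2 z" if "z \<in> ball 0 1" "z \<noteq> 0" for z
      using DERIV_imp_deriv[OF Wd1[OF that]] .
   qed auto
   then show ?thesis by simp
  qed
  have Wd: "(W has_field_derivative - V2 z) (at z within ball 0 1)" if z: "z \<in> ball 0 1" for z
  proof (cases "z = 0")
    case True then show ?thesis using holomorphic_derivI[OF Wh open_ball z] dW by simp
  next
    case False then show ?thesis using Wd1[OF z False] has_field_derivative_at_within by blast
  qed
  have Hlt: "norm (H z) < 1" if z: "z \<in> ball 0 1" for z
  proof -
    have "norm (W z - W 0) \<le> 1 * norm (z - 0)"
      by (rule field_differentiable_bound[OF convex_ball Wd]) (use V2le z in auto)
    then have "norm (W z) \<le> norm z" using W0 by simp
    then have "norm (H z) \<le> norm z * norm z" using HW[of z] z by (simp add: norm_mult mult_left_mono)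
    also have "\<dots> < 1" using z using mult_strict_mono[of "norm z" 1 "norm z" 1] by simp
    finally show ?thesis .
  qed
  have Gnz: "G z \<noteq> 0" if z: "z \<in> ball 0 1" for z
    using Hlt[OF z] by (auto simp: H_def)
  define F where "F z = z / G z" for z
  have Fd: "(F has_field_derivative (G z - z * G' z) / (G z)^2) (at z)" if z: "z \<in> ball 0 1" for z
  proof -
    have "(F has_field_derivative (1 * G z - G' z * z) / (G z ^ Suc (Suc 0))) (at z)"
      unfolding F_def by (rule DERIV_quotient[OF DERIV_ident Gd[OF z] Gnz[OF z]])
    then show ?thesis by (simp add: power2_eq_square mult.commute)
  qed
  have oddeq: "odd_part f z = F z" if z: "z \<in> ball 0 1" for z
  proof (cases "z = 0")
    case True then show ?thesis by (simp add: odd_part_def F_def)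
  next
    case False
    have 1: "z / f z = g z" using fg[OF z] False gnz[OF z] by simp
    have 2: "z / (- f (- z)) = g (-z)" unfolding fg[OF neg[OF z]] using False gnz[OF neg[OF z]] by simp
    have "odd_part f z = z / ((1/2) * (z / f z + z / (- f (- z))))" using False by (simp add: odd_part_def)
    also have "\<dots> = F z" unfolding 1 2 F_def G_def by simp
    finally show ?thesis .
  qed
  have oddd: "(odd_part f has_field_derivative (G z - z * G' z) / (G z)^2) (at z)" if z: "z \<in> ball 0 1" for z
    by (rule has_field_derivative_transform_within_open[OF Fd[OF z] open_ball z]) (simp add: oddeq)
  have oh: "odd_part f holomorphic_on ball 0 1" using oddd by (auto simp: holomorphic_on_open) blast
  have od0: "deriv (odd_part f) 0 = 1" using DERIV_imp_deriv[OF oddd[of 0]] G0 by simp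
  have onz: "odd_part f z \<noteq> 0" if "z \<in> ball 0 1" "z \<noteq> 0" for z
    using oddeq[OF that(1)] Gnz[OF that(1)] that(2) by (simp add: F_def)
  have oU: "norm (U_op (odd_part f) z) < lam" if z: "z \<in> ball 0 1" for z
  proof (cases "z = 0")
    case True then show ?thesis using assms(1) by (simp add: U_op_def)
  next
    case False
    have "z / odd_part f z = G z" using oddeq[OF z] False Gnz[OF z] by (simp add: F_def)
    then have "U_op (odd_part f) z = V z" using False Gnz[OF z] DERIV_imp_deriv[OF oddd[OF z]]
      by (simp add: U_op_def V_def power2_eq_square field_simps)
    then show ?thesis using Vlt[OF z] by simp
  qed
  show ?thesis using oh od0 onz oU
    by (auto simp: classU_def classA_def unit_disk_def odd_part_def)
qed

end
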